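(* Let $p\ge2$ and $m\ge1$ be integers and $d=2p$. There exist $W\in\mathbb{R}^{2p\times p}$ and $V\in\mathbb{R}^{p\times 2p}$ such that the sine network $s^\theta(x)=V\sin(Wx)$ satisfies, for every $x\in\mathcal{X}_m$, $s^\theta_{y(x)}(x)=p$ and $s^\theta_q(x)=0$ for all $q\ne y(x)$ (so $h_\theta(x)=y(x)$ with margin $p$), and moreover $\|V\|_2=\sqrt p$ and $\|W\|_F\le\pi\sqrt2\,p$.
   Context: Let $[p]=\{0,\dots,p-1\}$ and $\mathcal{X}_m=\{x\in\{0,\dots,m\}^p:\|x\|_1=m\}$, coordinates indexed by $[p]$; $y(x)=(\sum_{r\in[p]}r\,x_r)\bmod p$. $\sin$ is applied entrywise. The predictor is $h_\theta(x)=\ell$ if $s^\theta_\ell(x)>s^\theta_k(x)$ for all $k\ne\ell$, and $\bot$ otherwise. $\|V\|_2$ is the spectral norm and $\|W\|_F$ the Frobenius norm. *)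

theory Defs
  imports "HOL-Analysis.Analysis"
begin

text \<open>Matrices of varying size are represented as functions nat => nat => real;
  only entries with row index < rows and column index < cols are relevant.
  Vectors in R^n are functions nat => real with coordinates 0..n-1.\<close>

definition Xset :: "nat \<Rightarrow> nat \<Rightarrow> (nat \<Rightarrow> nat) set" where
  "Xset p m = {x. (\<forall>r<p. x r \<le> m) \<and> (\<forall>r\<ge>p. x r = 0) \<and> (\<Sum>r<p. x r) = m}"

definition ylabel :: "nat \<Rightarrow> (nat \<Rightarrow> nat) \<Rightarrow> nat" where
  "ylabel p x = (\<Sum>r<p. r * x r) mod p"

definition sine_net :: "nat \<Rightarrow> (nat \<Rightarrow> nat \<Rightarrow> real) \<Rightarrow> (nat \<Rightarrow> nat \<Rightarrow> real)
    \<Rightarrow> (nat \<Rightarrow> nat) \<Rightarrow> nat \<Rightarrow> real" where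
  "sine_net p W V x q = (\<Sum>k<2*p. V q k * sin (\<Sum>j<p. W k j * real (x j)))"

definition predictor :: "nat \<Rightarrow> (nat \<Rightarrow> real) \<Rightarrow> nat option" where
  "predictor p s = (if \<exists>l<p. \<forall>k<p. k \<noteq> l \<longrightarrow> s l > s k
                    then Some (THE l. l < p \<and> (\<forall>k<p. k \<noteq> l \<longrightarrow> s l > s k)) else None)"

definition vnorm :: "nat \<Rightarrow> (nat \<Rightarrow> real) \<Rightarrow> real" where
  "vnorm n v = sqrt (\<Sum>j<n. (v j)\<^sup>2)"

definition spec_norm :: "nat \<Rightarrow> nat \<Rightarrow> (nat \<Rightarrow> nat \<Rightarrow> real) \<Rightarrow> real" where
  "spec_norm r c A = Sup {vnorm r (\<lambda>i. \<Sum>j<c. A i j * v j) | v. vnorm c v = 1}"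

definition frob_norm :: "nat \<Rightarrow> nat \<Rightarrow> (nat \<Rightarrow> nat \<Rightarrow> real) \<Rightarrow> real" where
  "frob_norm r c A = sqrt (\<Sum>i<r. \<Sum>j<c. (A i j)\<^sup>2)"

end

theory Submission
  imports Defs
begin
lemma cos_sum:
  fixes p :: nat and n :: int
  assumes "p > 0"
  shows "(\<Sum>k<p. cos (2*pi*real k * of_int n/real p)) = (if int p dvd n then real p else 0)"
proof (cases "int p dvd n")
  case True
  then obtain t where t: "n = int p * t" by blast
  have "cos (2*pi*real k * of_int n/real p) = 1" for k
  proof -
    have "2*pi*real k * of_int n/real p = 2*pi * of_int (int k * t)"
      using assms by (simp add: t field_simps)
    then show ?thesis by (metis cos_int_2pin)
  qed
  then show ?thesis using True by simp
next
  case False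
  define z where "z = cis (2*pi * of_int n/real p)"
  have zk: "Re (z ^ k) = cos (2*pi*real k * of_int n/real p)" for k
    by (simp add: z_def Complex.DeMoivre field_simps)
  have zp: "z ^ p = 1"
  proof -
    have "z ^ p = cis (2*pi * of_int n)" using assms by (simp add: z_def Complex.DeMoivre)
    also have "\<dots> = 1" by simp
    finally show ?thesis .
  qed
  have z1: "z \<noteq> 1"
  proof
    assume "z = 1"
    then have "cos (2*pi * of_int n/real p) = 1"
      by (metis Re_complex_of_real cis.sel(1) of_real_1 z_def)
    then obtain N :: int where "2*pi * of_int n/real p = of_int N * 2 * pi"
      using cos_one_2pi_int by blast
    then have "of_int n = real p * of_int N" using assms by (simp add: field_simps)
    then have "n = int p * N" by (metis of_int_eq_iff of_int_mult of_int_of_nat_eq)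
    then show False using False by simp
  qed
  have "(\<Sum>k<p. z ^ k) = 0" using geometric_sum[OF z1, of p] zp by simp
  then have "Re (\<Sum>k<p. z ^ k) = 0" by simp
  then show ?thesis using False by (simp add: zk)
qed
definition red :: "real \<Rightarrow> real" where
  "red t = t - 2*pi * of_int \<lfloor>t/(2*pi) + 1/2\<rfloor>"

lemma red_bound: "\<bar>red t\<bar> \<le> pi"
proof -
  define u where "u = t/(2*pi) + 1/2"
  have t: "t = 2*pi*(u - 1/2)" unfolding u_def by (simp add: field_simps)
  have "of_int \<lfloor>u\<rfloor> \<le> u" "u < of_int \<lfloor>u\<rfloor> + 1" by linarith+
  moreover have "red t = 2*pi*(u - of_int \<lfloor>u\<rfloor>) - pi"
    unfolding red_def u_def[symmetric] by (simp add: t algebra_simps)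
  ultimately have a: "0 \<le> u - of_int \<lfloor>u\<rfloor>" "u - of_int \<lfloor>u\<rfloor> \<le> 1" by linarith+
  have b: "0 \<le> 2*pi*(u - of_int \<lfloor>u\<rfloor>)" using a by simp
  have c: "2*pi*(u - of_int \<lfloor>u\<rfloor>) \<le> 2*pi*1"
    using mult_left_mono[OF a(2), of "2*pi"] by simp
  show ?thesis using b c \<open>red t = _\<close> by (simp add: abs_le_iff)
qed

lemma sin_shift: "sin (a - 2*pi * of_int M) = sin a"
  by (simp add: sin_diff)

lemma sin_red_sum:
  "sin (\<Sum>j<p. red (f j) * real (x j)) = sin (\<Sum>j<p. f j * real (x j))"
proof -
  have "(\<Sum>j<p. red (f j) * real (x j)) =
        (\<Sum>j<p. f j * real (x j)) - 2*pi * of_int (\<Sum>j<p. \<lfloor>f j/(2*pi) + 1/2\<rfloor> * int (x j))"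
    by (simp add: red_def algebra_simps sum_subtractf sum_distrib_left of_int_sum)
  then show ?thesis by (simp only: sin_shift)
qed

lemma sum_even_odd: fixes p :: nat shows "(\<Sum>k<2*p. f k) = (\<Sum>k<p. f (2*k) + f (2*k+1))"
  by (induction p) (simp_all add: algebra_simps)

lemma bessel:
  fixes R :: "nat \<Rightarrow> nat \<Rightarrow> real" and c :: real
  assumes c: "c > 0"
    and orth: "\<And>q q'. q < P \<Longrightarrow> q' < P \<Longrightarrow> (\<Sum>k<n. R q k * R q' k) = (if q = q' then c else 0)"
  shows "(\<Sum>q<P. (\<Sum>k<n. R q k * v k)\<^sup>2) \<le> c * (\<Sum>k<n. (v k)\<^sup>2)"
proof -
  define u where "u q = (\<Sum>k<n. R q k * v k)" for q
  define U where "U = (\<Sum>q<P. (u q)\<^sup>2)"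
  define w where "w k = (\<Sum>q<P. u q * R q k)" for k
  have A: "(\<Sum>k<n. v k * w k) = U"
  proof -
    have "(\<Sum>k<n. v k * w k) = (\<Sum>k<n. \<Sum>q<P. u q * (R q k * v k))"
      unfolding w_def by (simp add: sum_distrib_left mult_ac)
    also have "\<dots> = (\<Sum>q<P. \<Sum>k<n. u q * (R q k * v k))"
      by (rule sum.swap)
    also have "\<dots> = (\<Sum>q<P. u q * u q)"
      unfolding u_def by (simp add: sum_distrib_left)
    finally show ?thesis unfolding U_def power2_eq_square .
  qed
  have B: "(\<Sum>k<n. (w k)\<^sup>2) = c * U"
  proof -
    have "(\<Sum>k<n. (w k)\<^sup>2) = (\<Sum>k<n. \<Sum>q<P. \<Sum>q'<P. u q * u q' * (R q k * R q' k))"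
      unfolding w_def power2_eq_square
      by (simp add: sum_distrib_left sum_distrib_right mult_ac)
    also have "\<dots> = (\<Sum>q<P. \<Sum>k<n. \<Sum>q'<P. u q * u q' * (R q k * R q' k))"
      by (rule sum.swap)
    also have "\<dots> = (\<Sum>q<P. \<Sum>q'<P. \<Sum>k<n. u q * u q' * (R q k * R q' k))"
      by (intro sum.cong refl sum.swap)
    also have "\<dots> = (\<Sum>q<P. \<Sum>q'<P. u q * u q' * (\<Sum>k<n. R q k * R q' k))"
      by (simp add: sum_distrib_left)
    also have "\<dots> = (\<Sum>q<P. \<Sum>q'<P. if q = q' then c * (u q)\<^sup>2 else 0)"
      by (intro sum.cong refl) (simp add: orth power2_eq_square)
    also have "\<dots> = c * U" by (simp add: U_def sum_distrib_left)
    finally show ?thesis .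
  qed
  have "0 \<le> (\<Sum>k<n. (v k - w k / c)\<^sup>2)" by (simp add: sum_nonneg)
  also have "\<dots> = (\<Sum>k<n. (v k)\<^sup>2 - 2/c * (v k * w k) + (w k)\<^sup>2 / c^2)"
  proof (intro sum.cong refl)
    fix k show "(v k - w k / c)\<^sup>2 = (v k)\<^sup>2 - 2/c * (v k * w k) + (w k)\<^sup>2 / c^2"
      using c by (simp add: power2_diff power_divide)
  qed
  also have "\<dots> = (\<Sum>k<n. (v k)\<^sup>2) - 2/c * (\<Sum>k<n. v k * w k) + (\<Sum>k<n. (w k)\<^sup>2) / c^2"
    by (simp only: sum.distrib sum_subtractf sum_distrib_left sum_divide_distrib)
  also have "\<dots> = (\<Sum>k<n. (v k)\<^sup>2) - U / c"
    unfolding A B using c by (simp add: power2_eq_square field_simps)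
  finally show ?thesis using c unfolding U_def u_def by (simp add: field_simps)
qed


definition th :: "nat \<Rightarrow> nat \<Rightarrow> nat \<Rightarrow> nat \<Rightarrow> real" where
  "th p m k j = 2*pi*real (k div 2)*real j/real p + (if odd k then pi/(2*real m) else 0)"

definition Wc :: "nat \<Rightarrow> nat \<Rightarrow> nat \<Rightarrow> nat \<Rightarrow> real" where
  "Wc p m k j = red (th p m k j)"

definition Vc :: "nat \<Rightarrow> nat \<Rightarrow> nat \<Rightarrow> real" where
  "Vc p q k = (if even k then sin (2*pi*real (k div 2)*real q/real p)
               else cos (2*pi*real (k div 2)*real q/real p))"

lemma dvd_diff_iff:
  fixes p q q' :: nat
  assumes "q' < p"
  shows "int p dvd (int q - int q') \<longleftrightarrow> q mod p = q'"
proof -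
  have "int p dvd (int q - int q') \<longleftrightarrow> int q mod int p = int q' mod int p"
    by (simp add: mod_eq_dvd_iff)
  also have "\<dots> \<longleftrightarrow> q mod p = q' mod p"
    by (metis of_nat_eq_iff zmod_int)
  also have "\<dots> \<longleftrightarrow> q mod p = q'" using assms by simp
  finally show ?thesis .
qed

lemma cos_combine: "sin (b::real) * sin a + cos b * cos a = cos (a - b)"
  using cos_diff[of a b] by (metis mult.commute add.commute)

lemma rows_orth:
  fixes p q q' :: nat
  assumes p: "p > 0" and "q < p" "q' < p"
  shows "(\<Sum>k<2*p. Vc p q k * Vc p q' k) = (if q = q' then real p else 0)"
proof -
  have "(\<Sum>k<2*p. Vc p q k * Vc p q' k)
      = (\<Sum>k<p. cos (2*pi*real k * of_int (int q - int q')/real p))"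
  proof (subst sum_even_odd, intro sum.cong refl)
    fix k
    have "Vc p q (2*k) * Vc p q' (2*k) + Vc p q (2*k+1) * Vc p q' (2*k+1)
        = sin (2*pi*real k*real q'/real p) * sin (2*pi*real k*real q/real p)
          + cos (2*pi*real k*real q'/real p) * cos (2*pi*real k*real q/real p)"
      by (simp add: Vc_def)
    also have "\<dots> = cos (2*pi*real k*real q/real p - 2*pi*real k*real q'/real p)"
      by (rule cos_combine)
    also have "2*pi*real k*real q/real p - 2*pi*real k*real q'/real p
        = 2*pi*real k * of_int (int q - int q')/real p"
      using p by (simp add: field_simps)
    finally show "Vc p q (2*k) * Vc p q' (2*k) + Vc p q (2*k+1) * Vc p q' (2*k+1)
        = cos (2*pi*real k * of_int (int q - int q')/real p)" .
  qed
  also have "\<dots> = (if q = q' then real p else 0)"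
    using assms cos_sum[OF p, of "int q - int q'"] dvd_diff_iff[of q' p q] by simp
  finally show ?thesis .
qed

lemma score:
  fixes p m q :: nat and x :: "nat \<Rightarrow> nat"
  assumes p: "p > 0" and m: "m \<ge> 1" and x: "x \<in> Xset p m" and q: "q < p"
  shows "sine_net p (Wc p m) (Vc p) x q = (if q = ylabel p x then real p else 0)"
proof -
  define S where "S = (\<Sum>r<p. r * x r)"
  have xs: "(\<Sum>j<p. real (x j)) = real m"
    using x unfolding Xset_def by (simp flip: of_nat_sum)
  have Sr: "real S = (\<Sum>j<p. real j * real (x j))"
    unfolding S_def by simp
  have thsum: "(\<Sum>j<p. th p m k j * real (x j))
      = 2*pi*real (k div 2)*real S/real p + (if odd k then pi/2 else 0)" for k
  proof -
    have "(\<Sum>j<p. th p m k j * real (x j))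
        = (2*pi*real (k div 2)/real p) * (\<Sum>j<p. real j * real (x j))
          + (if odd k then pi/(2*real m) else 0) * (\<Sum>j<p. real (x j))"
      unfolding th_def by (simp add: sum_distrib_left sum.distrib sum_divide_distrib algebra_simps)
    also have "\<dots> = 2*pi*real (k div 2)*real S/real p + (if odd k then pi/2 else 0)"
      using m by (simp add: xs Sr[symmetric])
    finally show ?thesis .
  qed
  have sk: "sin (\<Sum>j<p. Wc p m k j * real (x j))
      = sin (2*pi*real (k div 2)*real S/real p + (if odd k then pi/2 else 0))" for k
    unfolding Wc_def by (simp only: sin_red_sum thsum)
  have "sine_net p (Wc p m) (Vc p) x q
      = (\<Sum>k<p. cos (2*pi*real k * of_int (int S - int q)/real p))"
    unfolding sine_net_def
  proof (subst sum_even_odd, intro sum.cong refl)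
    fix k
    have "Vc p q (2*k) * sin (\<Sum>j<p. Wc p m (2*k) j * real (x j))
        + Vc p q (2*k+1) * sin (\<Sum>j<p. Wc p m (2*k+1) j * real (x j))
        = sin (2*pi*real k*real q/real p) * sin (2*pi*real k*real S/real p)
          + cos (2*pi*real k*real q/real p) * cos (2*pi*real k*real S/real p)"
      by (simp add: sk Vc_def sin_add)
    also have "\<dots> = cos (2*pi*real k*real S/real p - 2*pi*real k*real q/real p)"
      by (rule cos_combine)
    also have "2*pi*real k*real S/real p - 2*pi*real k*real q/real p
        = 2*pi*real k * of_int (int S - int q)/real p"
      using p by (simp add: field_simps)
    finally show "Vc p q (2*k) * sin (\<Sum>j<p. Wc p m (2*k) j * real (x j))
        + Vc p q (2*k+1) * sin (\<Sum>j<p. Wc p m (2*k+1) j * real (x j))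
        = cos (2*pi*real k * of_int (int S - int q)/real p)" .
  qed
  also have "\<dots> = (if int p dvd (int S - int q) then real p else 0)"
    by (rule cos_sum[OF p])
  also have "\<dots> = (if q = ylabel p x then real p else 0)"
    unfolding ylabel_def S_def[symmetric] using dvd_diff_iff[OF q, of S] by auto
  finally show ?thesis .
qed


lemma spec_Vc:
  fixes p :: nat
  assumes p: "p > 0"
  shows "spec_norm p (2*p) (Vc p) = sqrt (real p)"
proof -
  define A where "A = {vnorm p (\<lambda>i. \<Sum>j<2*p. Vc p i j * v j) | v. vnorm (2*p) v = 1}"
  have orth: "\<And>q q'. q < p \<Longrightarrow> q' < p \<Longrightarrow>
      (\<Sum>k<2*p. Vc p q k * Vc p q' k) = (if q = q' then real p else 0)"
    using rows_orth[OF p] by blast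
  have ub: "a \<le> sqrt (real p)" if "a \<in> A" for a
  proof -
    obtain v where v: "vnorm (2*p) v = 1" and a: "a = vnorm p (\<lambda>i. \<Sum>j<2*p. Vc p i j * v j)"
      using \<open>a \<in> A\<close> unfolding A_def by blast
    have s1: "(\<Sum>j<2*p. (v j)\<^sup>2) = 1"
      using v unfolding vnorm_def by (metis real_sqrt_eq_1_iff)
    have "(\<Sum>q<p. (\<Sum>k<2*p. Vc p q k * v k)\<^sup>2) \<le> real p * (\<Sum>k<2*p. (v k)\<^sup>2)"
      by (rule bessel[where c="real p" and P=p and n="2*p" and R="Vc p" and v=v]) (use p orth in auto)
    then show ?thesis unfolding a vnorm_def using s1 by simp
  qed
  define v0 where "v0 k = Vc p 0 k / sqrt (real p)" for k
  have sp: "sqrt (real p) > 0" using p by simp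
  have "(\<Sum>j<2*p. (v0 j)\<^sup>2) = (\<Sum>j<2*p. Vc p 0 j * Vc p 0 j) / real p"
    unfolding v0_def using p by (simp add: power_divide power2_eq_square sum_divide_distrib)
  also have "\<dots> = 1" using orth[of 0 0] p by simp
  finally have v0n: "vnorm (2*p) v0 = 1" unfolding vnorm_def by simp
  have img: "(\<Sum>j<2*p. Vc p i j * v0 j) = (if i = 0 then real p / sqrt (real p) else 0)" if "i < p" for i
  proof -
    have "(\<Sum>j<2*p. Vc p i j * v0 j) = (\<Sum>j<2*p. Vc p i j * Vc p 0 j) / sqrt (real p)"
      unfolding v0_def by (simp add: sum_divide_distrib)
    also have "\<dots> = (if i = 0 then real p / sqrt (real p) else 0)"
      using orth[of i 0] that p by simp
    finally show ?thesis .
  qed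
  have "vnorm p (\<lambda>i. \<Sum>j<2*p. Vc p i j * v0 j) = sqrt ((\<Sum>i<p. (if i = 0 then (real p / sqrt (real p))\<^sup>2 else 0)))"
    unfolding vnorm_def by (intro arg_cong[where f=sqrt] sum.cong refl) (simp add: img)
  also have "\<dots> = sqrt ((real p / sqrt (real p))\<^sup>2)" using p by simp
  also have "\<dots> = sqrt (real p)" using p by (simp add: power_divide power2_eq_square)
  finally have "vnorm p (\<lambda>i. \<Sum>j<2*p. Vc p i j * v0 j) = sqrt (real p)" .
  then have mem: "sqrt (real p) \<in> A" unfolding A_def using v0n by (metis (mono_tags, lifting) mem_Collect_eq)
  have "Sup A = sqrt (real p)" by (rule cSup_eq_maximum[OF mem]) (use ub in auto)
  then show ?thesis unfolding spec_norm_def A_def .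
qed

lemma frob_Wc:
  fixes p m :: nat
  shows "frob_norm (2*p) p (Wc p m) \<le> pi * sqrt 2 * real p"
proof -
  have "(Wc p m i j)\<^sup>2 \<le> pi\<^sup>2" for i j
    unfolding Wc_def using red_bound abs_le_square_iff by (metis abs_of_nonneg pi_ge_zero)
  then have "(\<Sum>i<2*p. \<Sum>j<p. (Wc p m i j)\<^sup>2) \<le> (\<Sum>i<2*p. \<Sum>j<p. pi\<^sup>2)"
    by (intro sum_mono) auto
  also have "\<dots> = (pi * sqrt 2 * real p)\<^sup>2" by (simp add: power_mult_distrib power2_eq_square)
  finally have "frob_norm (2*p) p (Wc p m) \<le> sqrt ((pi * sqrt 2 * real p)\<^sup>2)"
    unfolding frob_norm_def by (rule real_sqrt_le_mono)
  also have "\<dots> = pi * sqrt 2 * real p" by simp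
  finally show ?thesis .
qed

theorem mainTheorem12:
  fixes p m :: nat
  assumes "p \<ge> 2" and "m \<ge> 1"
  shows "\<exists>W V :: nat \<Rightarrow> nat \<Rightarrow> real.
           (\<forall>x\<in>Xset p m.
              (\<forall>q<p. sine_net p W V x q = (if q = ylabel p x then real p else 0))
              \<and> predictor p (sine_net p W V x) = Some (ylabel p x))
         \<and> spec_norm p (2*p) V = sqrt (real p)
         \<and> frob_norm (2*p) p W \<le> pi * sqrt 2 * real p"
proof (intro exI conjI ballI allI impI)
  have p: "p > 0" using assms by simp
  show "spec_norm p (2*p) (Vc p) = sqrt (real p)" by (rule spec_Vc[OF p])
  show "frob_norm (2*p) p (Wc p m) \<le> pi * sqrt 2 * real p" by (rule frob_Wc)
  fix x assume x: "x \<in> Xset p m"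
  have sc: "\<And>q. q < p \<Longrightarrow> sine_net p (Wc p m) (Vc p) x q = (if q = ylabel p x then real p else 0)"
    using score[OF p assms(2) x] by blast
  then show "\<And>q. q < p \<Longrightarrow> sine_net p (Wc p m) (Vc p) x q = (if q = ylabel p x then real p else 0)" .
  define y where "y = ylabel p x"
  have y: "y < p" unfolding y_def ylabel_def using p by simp
  have P: "y < p \<and> (\<forall>k<p. k \<noteq> y \<longrightarrow> sine_net p (Wc p m) (Vc p) x y > sine_net p (Wc p m) (Vc p) x k)"
    using y sc p unfolding y_def by auto
  have U: "l = y" if "l < p \<and> (\<forall>k<p. k \<noteq> l \<longrightarrow> sine_net p (Wc p m) (Vc p) x l > sine_net p (Wc p m) (Vc p) x k)" for l
  proof (rule ccontr)
    assume "l \<noteq> y"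
    then have "sine_net p (Wc p m) (Vc p) x l > sine_net p (Wc p m) (Vc p) x y" using that y by auto
    moreover have "ylabel p x < p" using y unfolding y_def .
    ultimately show False using sc[of l] sc[of y] that \<open>l \<noteq> y\<close> p unfolding y_def by auto
  qed
  have "(THE l. l < p \<and> (\<forall>k<p. k \<noteq> l \<longrightarrow> sine_net p (Wc p m) (Vc p) x l > sine_net p (Wc p m) (Vc p) x k)) = y"
    using P U by (rule the_equality)
  then show "predictor p (sine_net p (Wc p m) (Vc p) x) = Some (ylabel p x)"
    unfolding predictor_def y_def[symmetric] using P by auto
qed

end
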